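(* Let $n\ge 1$ and $\ln\hat q=[F_n(z_n)]^{-1}\ln z_n$. Then $$\vartheta(n)=\sum_{p\le n,\ p\text{ prime}}\ln p = 1_n^T\ln\hat q=\sum_{i=1}^n(\ln\hat q)_i.$$
   Context: $z_n=(1,\dots,n)^T$; logarithms of vectors are entry-wise; $1_n$ is the all-ones vector. For $1\le i\le n$, $e_{\bar i|n}\in\mathbb{R}^n$ has $k$-th entry $1$ if $i\mid k$, else $0$. For $2\le i\le n$, $f_{i|n}=\sum_{t=1}^{\lfloor \log_i n\rfloor} e_{\overline{i^t}|n}$, and $f_{1|n}=1_n$. $F_n(z_n)=[f_{1|n}\ \cdots\ f_{n|n}]\in\mathbb{R}^{n\times n}$, which is invertible. *)

theory Defs
  imports "HOL-Analysis.Analysis" "HOL-Computational_Algebra.Primes"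
begin

text \<open>Vectors in R^n are functions nat => real indexed by 1..n; the n x n matrix F_n(z_n)
  is the function (k,i) |-> k-th entry of column f_{i|n}, for 1 <= k,i <= n.\<close>

definition e_bar :: "nat \<Rightarrow> nat \<Rightarrow> real" where
  "e_bar i k = (if i dvd k then 1 else 0)"

definition f_vec :: "nat \<Rightarrow> nat \<Rightarrow> nat \<Rightarrow> real" where
  "f_vec n i k = (if i = 1 then 1
     else (\<Sum>t = 1..nat \<lfloor>log (real i) (real n)\<rfloor>. e_bar (i ^ t) k))"

definition F_mat :: "nat \<Rightarrow> nat \<Rightarrow> nat \<Rightarrow> real" where
  "F_mat n k i = f_vec n i k"

definition cheb_theta :: "nat \<Rightarrow> real" where
  "cheb_theta n = (\<Sum>p | prime p \<and> p \<le> n. ln (real p))"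

end

theory Submission
  imports Defs
begin

lemma F_above:
  assumes "1 \<le> k" "k < i"
  shows "F_mat n k i = 0"
proof -
  have "e_bar (i ^ t) k = 0" if "t \<in> {1..nat \<lfloor>log (real i) (real n)\<rfloor>}" for t
  proof -
    have "i \<le> i ^ t" using that assms by (simp add: self_le_power)
    hence "\<not> i ^ t dvd k" using assms by (meson dvd_imp_le leD less_le_trans order.strict_trans2 zero_less_one)
    thus ?thesis by (simp add: e_bar_def)
  qed
  thus ?thesis using assms by (simp add: F_mat_def f_vec_def)
qed

lemma F_diag:
  assumes "1 \<le> k" "k \<le> n"
  shows "F_mat n k k = 1"
proof (cases "k = 1")
  case True thus ?thesis by (simp add: F_mat_def f_vec_def)
next
  case False
  hence k2: "k \<ge> 2" using assms by simp
  define L where "L = nat \<lfloor>log (real k) (real n)\<rfloor>"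
  have "real 1 \<le> log (real k) (real n)"
    by (rule le_log_of_power) (use k2 assms in auto)
  hence L1: "L \<ge> 1" unfolding L_def by linarith
  have "{1..L} = insert 1 {2..L}" using L1 by auto
  moreover have "e_bar (k ^ t) k = 0" if "t \<in> {2..L}" for t
  proof -
    have "k ^ 2 \<le> k ^ t" using that k2 by (intro power_increasing) auto
    moreover have "k < k ^ 2" using k2 by (simp add: power2_eq_square)
    ultimately have "\<not> k ^ t dvd k" using k2 by (meson dvd_imp_le leD less_le_trans not_less zero_less_iff_neq_zero
        le_trans not_numeral_le_zero)
    thus ?thesis by (simp add: e_bar_def)
  qed
  ultimately show ?thesis using False unfolding F_mat_def f_vec_def L_def[symmetric]
    by (simp add: e_bar_def)
qed

lemma F_prime:
  assumes "prime p" "p \<le> n" "1 \<le> k" "k \<le> n"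
  shows "F_mat n k p = real (multiplicity p k)"
proof -
  define L where "L = nat \<lfloor>log (real p) (real n)\<rfloor>"
  define m where "m = multiplicity p k"
  have p2: "p \<ge> 2" using assms prime_ge_2_nat by blast
  have "p ^ m \<le> k" unfolding m_def using assms by (intro dvd_imp_le multiplicity_dvd) auto
  hence "real m \<le> log (real p) (real n)"
    by (intro le_log_of_power) (use p2 assms in auto)
  hence mL: "m \<le> L" unfolding L_def by linarith
  have dv: "e_bar (p ^ t) k = (if t \<le> m then 1 else 0)" for t
    unfolding e_bar_def m_def using assms power_dvd_iff_le_multiplicity[of k p t]
    by (simp add: prime_nat_iff)
  have "F_mat n k p = (\<Sum>t\<in>{1..L}. if t \<le> m then 1 else 0)"
    using p2 unfolding F_mat_def f_vec_def L_def[symmetric] dv by simp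
  also have "\<dots> = (\<Sum>t\<in>{1..m}. (1::real))"
    by (rule sum.mono_neutral_cong_right) (use mL in auto)
  finally show ?thesis by (simp add: m_def)
qed

lemma ln_factor:
  assumes "1 \<le> k" "k \<le> n"
  shows "ln (real k) = (\<Sum>p | prime p \<and> p \<le> n. real (multiplicity p k) * ln (real p))"
proof -
  have "real k = real (\<Prod>p\<in>prime_factors k. p ^ multiplicity p k)"
    using prime_factorization_nat[of k] assms by simp
  hence "ln (real k) = ln (\<Prod>p\<in>prime_factors k. real p ^ multiplicity p k)" by simp
  also have "\<dots> = (\<Sum>p\<in>prime_factors k. ln (real p ^ multiplicity p k))"
    by (rule ln_prod) (auto simp: in_prime_factors_iff prime_gt_0_nat)
  also have "\<dots> = (\<Sum>p\<in>prime_factors k. real (multiplicity p k) * ln (real p))"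
    by (intro sum.cong refl) (auto simp: ln_realpow in_prime_factors_iff prime_gt_0_nat)
  also have "\<dots> = (\<Sum>p | prime p \<and> p \<le> n. real (multiplicity p k) * ln (real p))"
  proof (rule sum.mono_neutral_left)
    show "finite {p. prime p \<and> p \<le> n}" by simp
    show "prime_factors k \<subseteq> {p. prime p \<and> p \<le> n}"
      using assms by (auto simp: in_prime_factors_iff dest!: dvd_imp_le)
    show "\<forall>i\<in>{p. prime p \<and> p \<le> n} - prime_factors k. real (multiplicity i k) * ln (real i) = 0"
      using assms by (auto simp: in_prime_factors_iff not_dvd_imp_multiplicity_0)
  qed
  finally show ?thesis .
qed

lemma uniq:
  assumes "\<forall>i. i \<notin> {1..n} \<longrightarrow> d i = 0"
    and "\<forall>k\<in>{1..n}. (\<Sum>i = 1..n. F_mat n k i * d i) = 0"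
  shows "d i = 0"
proof (induction i rule: less_induct)
  case (less k)
  show ?case
  proof (cases "k \<in> {1..n}")
    case False thus ?thesis using assms(1) by auto
  next
    case True
    have "(\<Sum>i = 1..n. F_mat n k i * d i) = F_mat n k k * d k + (\<Sum>i\<in>{1..n}-{k}. F_mat n k i * d i)"
      using True by (simp add: sum.remove)
    also have "(\<Sum>i\<in>{1..n}-{k}. F_mat n k i * d i) = 0"
    proof (rule sum.neutral, rule ballI)
      fix i assume i: "i \<in> {1..n}-{k}"
      show "F_mat n k i * d i = 0"
      proof (cases "i < k")
        case True thus ?thesis using less by simp
      next
        case False thus ?thesis using i True F_above[of k i n] by auto
      qed
    qed
    finally show ?thesis using assms(2) True F_diag[of k n] by auto
  qed
qed

theorem mainTheorem9:
  fixes n :: nat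
  assumes "n \<ge> 1"
  shows "(\<exists>!q :: nat \<Rightarrow> real. (\<forall>i. i \<notin> {1..n} \<longrightarrow> q i = 0) \<and>
            (\<forall>k\<in>{1..n}. (\<Sum>i = 1..n. F_mat n k i * q i) = ln (real k)))
       \<and> (\<forall>q :: nat \<Rightarrow> real. (\<forall>i. i \<notin> {1..n} \<longrightarrow> q i = 0) \<and>
            (\<forall>k\<in>{1..n}. (\<Sum>i = 1..n. F_mat n k i * q i) = ln (real k))
            \<longrightarrow> cheb_theta n = (\<Sum>i = 1..n. q i))"
proof -
  define P where "P = (\<lambda>q :: nat \<Rightarrow> real. (\<forall>i. i \<notin> {1..n} \<longrightarrow> q i = 0) \<and>
            (\<forall>k\<in>{1..n}. (\<Sum>i = 1..n. F_mat n k i * q i) = ln (real k)))"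
  define q0 where "q0 = (\<lambda>i. if prime i \<and> i \<le> n then ln (real i) else 0)"
  have S: "{p. prime p \<and> p \<le> n} = {i\<in>{1..n}. prime i}"
    using prime_ge_1_nat by fastforce
  have P0: "P q0"
    unfolding P_def
  proof (intro conjI allI impI ballI)
    fix i assume "i \<notin> {1..n}" thus "q0 i = 0" using prime_gt_0_nat[of i] by (auto simp: q0_def Suc_le_eq)
  next
    fix k assume k: "k \<in> {1..n}"
    have "(\<Sum>i = 1..n. F_mat n k i * q0 i) = (\<Sum>i\<in>{i\<in>{1..n}. prime i}. F_mat n k i * ln (real i))"
      by (simp add: q0_def sum.inter_filter[symmetric] if_distrib cong: if_cong)
    also have "\<dots> = (\<Sum>p | prime p \<and> p \<le> n. real (multiplicity p k) * ln (real p))"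
      unfolding S using k by (intro sum.cong refl) (auto simp: F_prime)
    also have "\<dots> = ln (real k)" using k ln_factor by auto
    finally show "(\<Sum>i = 1..n. F_mat n k i * q0 i) = ln (real k)" .
  qed
  have U: "q = q0" if "P q" for q
  proof
    fix i
    have "(\<lambda>i. q i - q0 i) i = 0"
    proof (rule uniq[of n])
      show "\<forall>i. i \<notin> {1..n} \<longrightarrow> q i - q0 i = 0" using that P0 unfolding P_def by auto
      show "\<forall>k\<in>{1..n}. (\<Sum>i = 1..n. F_mat n k i * (q i - q0 i)) = 0"
        using that P0 unfolding P_def by (simp add: right_diff_distrib sum_subtractf)
    qed
    thus "q i = q0 i" by simp
  qed
  have th: "cheb_theta n = (\<Sum>i = 1..n. q0 i)"
    unfolding cheb_theta_def S q0_def by (simp add: sum.inter_filter[symmetric])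
  have "\<forall>q. P q \<longrightarrow> cheb_theta n = (\<Sum>i = 1..n. q i)" using U th by auto
  moreover have "\<exists>!q. P q" using P0 U by blast
  ultimately show ?thesis unfolding P_def by blast
qed

end
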